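(* Let $p\geq 2$ be an integer. Then \[ c_0\!\left(\frac{1}{p}\right)=\frac{p(p-1)(p-2)}{\pi}\sum_{k\geq 0}\frac{\left(k+1-\frac{p}{2}\left\lfloor\frac{k}{p}\right\rfloor\right)\left(\left\lfloor\frac{k}{p}\right\rfloor+1\right)}{(k+1)(k+p+1)(k+2)(k+p)} . \]
   Context: For a positive integer $p$ and an integer $q$ with $1\le q\le p-1$ and $\gcd(p,q)=1$, the cotangent sum is $c_0\!\left(\frac{q}{p}\right)=-\sum_{k=1}^{p-1}\frac{k}{p}\cot\frac{\pi k q}{p}$. Here $\lfloor\cdot\rfloor$ is the floor function. *)

theory Defs
  imports "HOL-Analysis.Analysis"
begin

definition c0 :: "nat \<Rightarrow> nat \<Rightarrow> real" where
  "c0 q p = - (\<Sum>k = 1..p - 1. (real k / real p) * cot (pi * real k * real q / real p))"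

end

theory Submission
  imports Defs "HOL-Analysis.Analysis"
begin


lemma gamma_refl_real:
  fixes y :: real assumes "0 < y" "y < 1"
  shows "Gamma y * Gamma (1 - y) * sin (pi * y) = pi"
proof -
  have s: "sin (pi * y) > 0" using assms by (intro sin_gt_zero) auto
  have "Gamma (complex_of_real y) * Gamma (1 - complex_of_real y) = of_real pi / sin (of_real pi * of_real y)"
    by (rule Gamma_reflection_complex)
  also have "Gamma (complex_of_real y) * Gamma (1 - complex_of_real y) = of_real (Gamma y * Gamma (1 - y))"
    by (metis Gamma_complex_of_real of_real_1 of_real_diff of_real_mult)
  also have "of_real pi / sin (of_real pi * of_real y) = complex_of_real (pi / sin (pi * y))"
    by (metis of_real_divide of_real_mult sin_of_real)
  finally have "Gamma y * Gamma (1 - y) = pi / sin (pi * y)" by (metis of_real_eq_iff)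
  with s show ?thesis by (simp add: field_simps)
qed

lemma digamma_refl_real:
  fixes x :: real assumes x: "0 < x" "x < 1"
  shows "Digamma (1 - x) - Digamma x = pi * cot (pi * x)"
proof -
  define g where "g y = Gamma y * Gamma (1 - y) * sin (pi * y)" for y :: real
  have n1: "x \<notin> \<int>\<^sub>\<le>\<^sub>0" using x by auto
  have n2: "1 - x \<notin> \<int>\<^sub>\<le>\<^sub>0" using x by auto
  have d1: "(g has_real_derivative
      (Gamma x * Digamma x * Gamma (1 - x) * sin (pi * x)
       - Gamma x * (Gamma (1 - x) * Digamma (1 - x)) * sin (pi * x)
       + Gamma x * Gamma (1 - x) * (cos (pi * x) * pi))) (at x)"
    unfolding g_def using n1 n2
    by (auto intro!: derivative_eq_intros simp: algebra_simps)
  have d0: "((\<lambda>_. pi) has_real_derivative 0) (at x)" by simp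
  have d2: "(g has_real_derivative 0) (at x)"
    by (rule has_field_derivative_transform_within_open[OF d0, of "{0<..<1}"])
       (use x in \<open>auto simp: g_def gamma_refl_real\<close>)
  have eq: "Gamma x * Digamma x * Gamma (1 - x) * sin (pi * x)
       - Gamma x * (Gamma (1 - x) * Digamma (1 - x)) * sin (pi * x)
       + Gamma x * Gamma (1 - x) * (cos (pi * x) * pi) = 0"
    using DERIV_unique[OF d1 d2] .
  have s: "sin (pi * x) > 0" using x by (intro sin_gt_zero) auto
  have "Gamma x > 0" "Gamma (1 - x) > 0" using x by auto
  hence "Gamma x * Gamma (1 - x) * (sin (pi * x) * (Digamma x - Digamma (1 - x)) + cos (pi * x) * pi) = 0"
    using eq by (simp add: algebra_simps)
  hence "sin (pi * x) * (Digamma x - Digamma (1 - x)) + cos (pi * x) * pi = 0"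
    using \<open>Gamma x > 0\<close> \<open>Gamma (1 - x) > 0\<close> by simp
  with s show ?thesis by (simp add: cot_def field_simps)
qed



lemma cot_series:
  fixes x :: real assumes x: "0 < x" "x < 1"
  shows "(\<lambda>k. 1 / (real k + x) - 1 / (real k + 1 - x)) sums (pi * cot (pi * x))"
proof -
  have s1: "summable (\<lambda>n. inverse (real (Suc n)) - inverse ((1 - x) + real n))"
    using x by (intro summable_Digamma) auto
  have s2: "summable (\<lambda>n. inverse (real (Suc n)) - inverse (x + real n))"
    using x by (intro summable_Digamma) auto
  have "Digamma (1 - x) - Digamma x =
     (\<Sum>n. inverse (real (Suc n)) - inverse ((1 - x) + real n)) - (\<Sum>n. inverse (real (Suc n)) - inverse (x + real n))"
    by (simp add: Digamma_def)
  also have "\<dots> = (\<Sum>n. (inverse (real (Suc n)) - inverse ((1 - x) + real n)) - (inverse (real (Suc n)) - inverse (x + real n)))"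
    by (rule suminf_diff[OF s1 s2])
  finally have "(\<lambda>n. (inverse (real (Suc n)) - inverse ((1 - x) + real n)) - (inverse (real (Suc n)) - inverse (x + real n)))
      sums (pi * cot (pi * x))"
    using summable_sums[OF summable_diff[OF s1 s2]] digamma_refl_real[OF x] by simp
  thus ?thesis by (simp add: algebra_simps inverse_eq_divide)
qed



definition Bm :: "nat \<Rightarrow> nat \<Rightarrow> real" where
  "Bm p m = (\<Sum>j=1..p-1. (real p - 2 * real j) / (real p * real m + real j))"

lemma c0_series:
  fixes p :: nat assumes p: "p \<ge> 2"
  shows "(\<lambda>m. Bm p m) sums (pi * c0 1 p)"
proof -
  define P where "P = real p"
  have P0: "P > 0" using p by (simp add: P_def)
  define f where "f j m = - (real j / P) * (1 / (real m + real j / P) - 1 / (real m + 1 - real j / P))" for j m :: nat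
  have "\<And>j. j \<in> {1..p-1} \<Longrightarrow> (f j) sums (- (real j / P) * (pi * cot (pi * (real j / P))))"
  proof -
    fix j assume j: "j \<in> {1..p-1}"
    have "0 < real j / P" "real j / P < 1" using j P0 p by (auto simp: P_def field_simps)
    from sums_mult[OF cot_series[OF this], of "- (real j / P)"]
    show "(f j) sums (- (real j / P) * (pi * cot (pi * (real j / P))))" unfolding f_def[abs_def] by simp
  qed
  from sums_sum[OF this]
  have 1: "(\<lambda>m. \<Sum>j=1..p-1. f j m) sums (\<Sum>j=1..p-1. - (real j / P) * (pi * cot (pi * (real j / P))))" .
  have 2: "(\<Sum>j=1..p-1. - (real j / P) * (pi * cot (pi * (real j / P)))) = pi * c0 1 p"
    by (simp add: c0_def P_def sum_distrib_left sum_negf mult.assoc mult.left_commute)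
  have 3: "(\<Sum>j=1..p-1. f j m) = Bm p m" for m
  proof -
    have e: "f j m = real j / (P * real m + (P - real j)) - real j / (P * real m + real j)"
      if j: "j \<in> {1..p-1}" for j
    proof -
      have "real j < P" using j p by (auto simp: P_def)
      moreover have "real j > 0" using j by auto
      ultimately have a: "P * real m + (P - real j) > 0" "P * real m + real j > 0"
        using P0 by (auto intro: add_nonneg_pos)
      have b: "real m + real j / P = (P * real m + real j) / P" "real m + 1 - real j / P = (P * real m + (P - real j)) / P"
        using P0 by (auto simp: field_simps)
      have c: "-(x/P) * (1/(A/P) - 1/(B/P)) = x/B - x/A" for x A B
        using P0 by (simp add: right_diff_distrib)
      show ?thesis unfolding f_def b c by simp
    qed
    have "(\<Sum>j=1..p-1. f j m) = (\<Sum>j=1..p-1. real j / (P * real m + (P - real j))) - (\<Sum>j=1..p-1. real j / (P * real m + real j))"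
      by (simp add: e sum_subtractf)
    also have "(\<Sum>j=1..p-1. real j / (P * real m + (P - real j))) = (\<Sum>j=1..p-1. real (p - 1 + 1 - j) / (P * real m + (P - real (p - 1 + 1 - j))))"
      by (rule sum.atLeastAtMost_rev)
    also have "\<dots> = (\<Sum>j=1..p-1. (P - real j) / (P * real m + real j))"
      by (rule sum.cong) (use p in \<open>auto simp: P_def of_nat_diff\<close>)
    finally show ?thesis
      by (simp add: Bm_def P_def sum_subtractf[symmetric] diff_divide_distrib)
  qed
  show ?thesis using 1 unfolding 2 3 .
qed



definition Gt :: "nat \<Rightarrow> nat \<Rightarrow> real" where
  "Gt p k = ((real k + 1 - (real p / 2) * real (k div p)) * (real (k div p) + 1)) /
             ((real k + 1) * (real k + real p + 1) * (real k + 2) * (real k + real p))"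

definition Am :: "nat \<Rightarrow> nat \<Rightarrow> real" where
  "Am p m = (\<Sum>r<p. 1 / (real p * real m + real r + 1))"

definition Tm :: "nat \<Rightarrow> nat \<Rightarrow> real" where
  "Tm p m = real p * real m ^ 2 * Am p m - real p * real m - (real p - 1) / 2 / (real p * real m + 1) - 1 / (real m + 1)"

lemma sum_shift1: "(\<Sum>r<n. f (Suc r)) = (\<Sum>r<n. f r) - f 0 + (f n :: real)"
  by (induction n) auto

lemma frac4:
  fixes a1 a2 a3 a4 b1 b2 b3 b4 :: real
  assumes "b1 \<noteq> 0" "b2 \<noteq> 0" "b3 \<noteq> 0" "b4 \<noteq> 0"
  shows "a1/b1 + a2/b2 + a3/b3 + a4/b4 = (a1*b2*b3*b4 + b1*a2*b3*b4 + b1*b2*a3*b4 + b1*b2*b3*a4)/(b1*b2*b3*b4)"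
  using assms by (simp add: field_simps)

lemma pf_id:
  fixes x P M :: real
  assumes "x + 1 \<noteq> 0" "x + 2 \<noteq> 0" "x + P \<noteq> 0" "x + P + 1 \<noteq> 0"
  shows "P * (P - 1) * (P - 2) * (((x + 1 - (P / 2) * M) * (M + 1)) / ((x + 1) * (x + P + 1) * (x + 2) * (x + P))) =
     (- P * (P - 2) * M * (M + 1) / 2) / (x + 1) + (P * (M + 1) * (1 + P * M / 2)) / (x + 2)
   + (P * (M + 1) * (1 - P - P * M / 2)) / (x + P) + (P * (P - 2) * (M + 1) * (M + 2) / 2) / (x + P + 1)"
proof -
  have eqD: "(x + 1) * (x + P + 1) * (x + 2) * (x + P) = (x + 1) * (x + 2) * (x + P) * (x + P + 1)" by (simp only: ac_simps)
  have eqN: "P * (P - 1) * (P - 2) * ((x + 1 - (P / 2) * M) * (M + 1)) = 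
      (- P * (P - 2) * M * (M + 1) / 2) * (x + 2) * (x + P) * (x + P + 1) +
    (x + 1) * (P * (M + 1) * (1 + P * M / 2)) * (x + P) * (x + P + 1) +
    (x + 1) * (x + 2) * (P * (M + 1) * (1 - P - P * M / 2)) * (x + P + 1) +
    (x + 1) * (x + 2) * (x + P) * (P * (P - 2) * (M + 1) * (M + 2) / 2)"
    by (simp add: field_simps)
  have "P * (P - 1) * (P - 2) * (((x + 1 - (P / 2) * M) * (M + 1)) / ((x + 1) * (x + P + 1) * (x + 2) * (x + P)))
     = (P * (P - 1) * (P - 2) * ((x + 1 - (P / 2) * M) * (M + 1))) / ((x + 1) * (x + 2) * (x + P) * (x + P + 1))"
    by (simp only: times_divide_eq_right eqD)
  also note eqN
  also note frac4[OF assms, symmetric]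
  finally show ?thesis .
qed

lemma Gt_pf:
  fixes p m r :: nat
  assumes p: "p \<ge> 2" and r: "r < p"
  defines "P \<equiv> real p" and "M \<equiv> real m"
  defines "x \<equiv> P * M + real r"
  shows "P * (P - 1) * (P - 2) * Gt p (p * m + r) =
     (- P * (P - 2) * M * (M + 1) / 2) / (x + 1) + (P * (M + 1) * (1 + P * M / 2)) / (x + 2)
   + (P * (M + 1) * (1 - P - P * M / 2)) / (x + P) + (P * (P - 2) * (M + 1) * (M + 2) / 2) / (x + P + 1)"
proof -
  have d: "(p * m + r) div p = m" using r by simp
  have x0: "x \<ge> 0" unfolding x_def P_def M_def by simp
  have P2: "P \<ge> 2" using p unfolding P_def by simp
  have k: "real (p * m + r) = x" unfolding x_def P_def M_def by simp
  have pos: "x + 1 \<noteq> 0" "x + 2 \<noteq> 0" "x + P \<noteq> 0" "x + P + 1 \<noteq> 0" using x0 P2 by auto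
  show ?thesis unfolding Gt_def d k P_def[symmetric] M_def[symmetric]
    by (rule pf_id[OF pos])
qed

lemma sum_c_div: "(\<Sum>r<n. c / g r) = (c::real) * (\<Sum>r<n. 1 / g r)"
  by (simp add: sum_distrib_left)

lemma sumA2:
  "(\<Sum>r<p. 1 / (real p * real m + real r + 2)) = Am p m - 1 / (real p * real m + 1) + 1 / (real p * real m + real p + 1)"
proof -
  define f where "f r = 1 / (real p * real m + real r + 1)" for r
  have "(\<Sum>r<p. 1 / (real p * real m + real r + 2)) = (\<Sum>r<p. f (Suc r))"
    by (simp add: f_def algebra_simps)
  also have "\<dots> = (\<Sum>r<p. f r) - f 0 + f p" by (rule sum_shift1)
  finally show ?thesis by (simp add: f_def Am_def)
qed

lemma sumAP:
  "(\<Sum>r<p. 1 / (real p * real m + real r + real p)) = Am p (Suc m) - 1 / (real p * (real m + 1) + real p) + 1 / (real p * (real m + 1))"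
proof -
  define g where "g r = 1 / (real p * (real m + 1) + real r)" for r
  have "Am p (Suc m) = (\<Sum>r<p. g (Suc r))" by (simp add: g_def Am_def algebra_simps)
  also have "\<dots> = (\<Sum>r<p. g r) - g 0 + g p" by (rule sum_shift1)
  also have "(\<Sum>r<p. g r) = (\<Sum>r<p. 1 / (real p * real m + real r + real p))"
    by (simp add: g_def algebra_simps)
  finally show ?thesis by (simp add: g_def)
qed

lemma sumAP1:
  "(\<Sum>r<p. 1 / (real p * real m + real r + real p + 1)) = Am p (Suc m)"
  by (simp add: Am_def algebra_simps)

lemma Bm_alt:
  assumes p: "p \<ge> 2"
  shows "Bm p m = real p * (2 * real m + 1) * Am p m - 2 * real p + 1 / (real m + 1)"
proof -
  define P where "P = real p"
  define M where "M = real m"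
  have P2: "P \<ge> 2" using p by (simp add: P_def)
  have t: "(P - 2 * real j) / (P * M + real j) = P * (2 * M + 1) * (1 / (P * M + real j)) - 2" if "j \<ge> 1" for j :: nat
  proof -
    have "P * M + real j > 0" using that P2 by (simp add: M_def add_nonneg_pos)
    thus ?thesis by (simp add: field_simps)
  qed
  have "Bm p m = (\<Sum>j=1..p-1. P * (2 * M + 1) * (1 / (P * M + real j)) - 2)"
    unfolding Bm_def P_def[symmetric] M_def[symmetric]
  proof (rule sum.cong)
    fix j assume "j \<in> {1..p-1}"
    thus "(P - 2 * real j) / (P * M + real j) = P * (2 * M + 1) * (1 / (P * M + real j)) - 2" by (intro t) auto
  qed simp
  also have "\<dots> = P * (2 * M + 1) * (\<Sum>j=1..p-1. 1 / (P * M + real j)) - 2 * (P - 1)"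
    using p by (simp add: sum_subtractf sum_distrib_left P_def of_nat_diff)
  finally have b1: "Bm p m = P * (2 * M + 1) * (\<Sum>j=1..p-1. 1 / (P * M + real j)) - 2 * (P - 1)" .
  have a1: "Am p m = (\<Sum>j=1..p. 1 / (P * M + real j))"
    using sum.atLeast1_atMost_eq[of "\<lambda>j. 1 / (P * M + real j)" p]
    unfolding Am_def P_def M_def by (simp add: algebra_simps)
  have a2: "(\<Sum>j=1..p. 1 / (P * M + real j)) = (\<Sum>j=1..p-1. 1 / (P * M + real j)) + 1 / (P * M + P)"
    using p by (cases p) (auto simp: P_def)
  have e: "Bm p m = P * (2 * M + 1) * (Am p m - 1 / (P * M + P)) - 2 * (P - 1)" unfolding b1 a1 a2 by simp
  have "P * M + P = P * (M + 1)" by (simp add: algebra_simps)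
  moreover have "M + 1 > 0" by (simp add: M_def)
  moreover have "P * (2 * M + 1) * (1 / (P * (M + 1))) = (2 * M + 1) / (M + 1)"
    using P2 by simp
  moreover have "(2 * M + 1) / (M + 1) = 2 - 1 / (M + 1)"
    using \<open>M + 1 > 0\<close> by (simp add: field_simps)
  ultimately have "P * (2 * M + 1) * (1 / (P * M + P)) = 2 - 1 / (M + 1)" by simp
  thus ?thesis unfolding e P_def[symmetric] M_def[symmetric] by (simp add: algebra_simps)
qed



lemma blk_alg:
  fixes P M a0 a1 :: real
  assumes P: "P \<ge> 2" and M: "M \<ge> 0"
  shows "(- P * (P - 2) * M * (M + 1) / 2) * a0 + (P * (M + 1) * (1 + P * M / 2)) * (a0 - 1 / (P * M + 1) + 1 / (P * M + P + 1))
   + (P * (M + 1) * (1 - P - P * M / 2)) * (a1 - 1 / (P * (M + 1) + P) + 1 / (P * (M + 1))) + (P * (P - 2) * (M + 1) * (M + 2) / 2) * a1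
   = (P * (2 * M + 1) * a0 - 2 * P + 1 / (M + 1)) + (P * M ^ 2 * a0 - P * M - (P - 1) / 2 / (P * M + 1) - 1 / (M + 1))
     - (P * (M + 1) ^ 2 * a1 - P * (M + 1) - (P - 1) / 2 / (P * (M + 1) + 1) - 1 / (M + 1 + 1))"
proof -
  have pos: "P * M + 1 > 0" "P * M + P + 1 > 0" "P * (M + 1) + P > 0" "P * (M + 1) > 0" "M + 1 > 0" "M + 2 > 0"
    using P M by (auto intro: add_nonneg_pos add_pos_nonneg)
  have i: "(P * (M + 1) * (1 + P * M / 2)) * (1 / (P * M + 1)) = P * (M + 1) / 2 + 1 / 2 + (P - 1) / 2 / (P * M + 1)"
    using pos by (simp add: field_simps)
  have ii: "(P * (M + 1) * (1 + P * M / 2)) * (1 / (P * M + P + 1)) = P * (M + 1) / 2 - (P - 1) / 2 + (P - 1) / 2 / (P * (M + 1) + 1)"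
    using pos by (simp add: field_simps)
  have iii: "(P * (M + 1) * (1 - P - P * M / 2)) * (1 / (P * (M + 1) + P)) = - P * (M + 1) / 2 + (M + 1) / (M + 2)"
    using pos by (simp add: field_simps)
  have iv: "(P * (M + 1) * (1 - P - P * M / 2)) * (1 / (P * (M + 1))) = - P * M / 2 - P + 1"
    using pos by (simp add: field_simps)
  have v: "(M + 1) / (M + 2) = 1 - 1 / (M + 1 + 1)" using pos by (simp add: field_simps)
  define c2 where "c2 = P * (M + 1) * (1 + P * M / 2)"
  define c3 where "c3 = P * (M + 1) * (1 - P - P * M / 2)"
  define U where "U = (P - 1) / 2 / (P * M + 1)"
  define V where "V = (P - 1) / 2 / (P * (M + 1) + 1)"
  define W where "W = 1 / (M + 1 + 1)"
  define X where "X = 1 / (M + 1)"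
  have e: "c2 * (a0 - 1 / (P * M + 1) + 1 / (P * M + P + 1)) = c2 * a0 - c2 * (1 / (P * M + 1)) + c2 * (1 / (P * M + P + 1))"
    "c3 * (a1 - 1 / (P * (M + 1) + P) + 1 / (P * (M + 1))) = c3 * a1 - c3 * (1 / (P * (M + 1) + P)) + c3 * (1 / (P * (M + 1)))"
    by (simp_all only: right_diff_distrib distrib_left)
  show ?thesis
    unfolding c2_def[symmetric] c3_def[symmetric] e
    unfolding c2_def c3_def i ii iii iv v U_def[symmetric] V_def[symmetric] W_def[symmetric] X_def[symmetric]
    by (simp add: field_simps power2_eq_square)
qed

lemma block:
  fixes p m :: nat
  assumes p: "p \<ge> 2"
  shows "(\<Sum>r<p. real p * (real p - 1) * (real p - 2) * Gt p (p * m + r)) = Bm p m + Tm p m - Tm p (Suc m)"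
proof -
  let ?P = "real p" and ?M = "real m"
  have "(\<Sum>r<p. ?P * (?P - 1) * (?P - 2) * Gt p (p * m + r)) =
    (\<Sum>r<p. (- ?P * (?P - 2) * ?M * (?M + 1) / 2) / (?P * ?M + real r + 1) + (?P * (?M + 1) * (1 + ?P * ?M / 2)) / (?P * ?M + real r + 2)
   + (?P * (?M + 1) * (1 - ?P - ?P * ?M / 2)) / (?P * ?M + real r + ?P) + (?P * (?P - 2) * (?M + 1) * (?M + 2) / 2) / (?P * ?M + real r + ?P + 1))"
    by (rule sum.cong) (use Gt_pf[OF p] in auto)
  also have "\<dots> = (- ?P * (?P - 2) * ?M * (?M + 1) / 2) * (\<Sum>r<p. 1 / (?P * ?M + real r + 1))
     + (?P * (?M + 1) * (1 + ?P * ?M / 2)) * (\<Sum>r<p. 1 / (?P * ?M + real r + 2))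
     + (?P * (?M + 1) * (1 - ?P - ?P * ?M / 2)) * (\<Sum>r<p. 1 / (?P * ?M + real r + ?P))
     + (?P * (?P - 2) * (?M + 1) * (?M + 2) / 2) * (\<Sum>r<p. 1 / (?P * ?M + real r + ?P + 1))"
    by (simp only: sum.distrib sum_distrib_left times_divide_eq_right mult_1_right)
  also have "\<dots> = (- ?P * (?P - 2) * ?M * (?M + 1) / 2) * Am p m
     + (?P * (?M + 1) * (1 + ?P * ?M / 2)) * (Am p m - 1 / (?P * ?M + 1) + 1 / (?P * ?M + ?P + 1))
     + (?P * (?M + 1) * (1 - ?P - ?P * ?M / 2)) * (Am p (Suc m) - 1 / (?P * (?M + 1) + ?P) + 1 / (?P * (?M + 1)))
     + (?P * (?P - 2) * (?M + 1) * (?M + 2) / 2) * Am p (Suc m)"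
    unfolding sumA2 sumAP sumAP1 Am_def ..
  also have "\<dots> = Bm p m + Tm p m - Tm p (Suc m)"
  proof -
    have s: "real (Suc m) = real m + 1" by simp
    show ?thesis unfolding Bm_alt[OF p] Tm_def s
      by (rule blk_alg) (use p in auto)
  qed
  finally show ?thesis .
qed



lemma nonneg_group_sums:
  fixes f :: "nat \<Rightarrow> real"
  assumes nn: "\<And>n. 0 \<le> f n" and k: "0 < k" and lim: "(\<lambda>M. \<Sum>i<M*k. f i) \<longlonglongrightarrow> L"
  shows "f sums L"
proof -
  have inc: "incseq (\<lambda>M. \<Sum>i<M*k. f i)"
  proof (rule incseq_SucI)
    fix M show "(\<Sum>i<M*k. f i) \<le> (\<Sum>i<Suc M*k. f i)"
      by (rule sum_mono2) (use nn in auto)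
  qed
  have le: "(\<Sum>i<n. f i) \<le> L" for n
  proof -
    have "(\<Sum>i<n. f i) \<le> (\<Sum>i<n*k. f i)"
      by (rule sum_mono2) (use nn k in auto)
    also have "\<dots> \<le> L" using incseq_le[OF inc lim] .
    finally show ?thesis .
  qed
  have sm: "summable f" by (rule summableI_nonneg_bounded[OF nn le])
  have "(\<lambda>n. sum f {n * k ..< n * k + k}) sums suminf f"
    by (rule sums_group[OF summable_sums[OF sm] k])
  hence "(\<lambda>M. \<Sum>n<M. sum f {n * k ..< n * k + k}) \<longlonglongrightarrow> suminf f" by (simp add: sums_def)
  hence "(\<lambda>M. \<Sum>i<M*k. f i) \<longlonglongrightarrow> suminf f" by (simp add: sum.nat_group)
  hence "suminf f = L" using lim LIMSEQ_unique by blast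
  with summable_sums[OF sm] show ?thesis by simp
qed

lemma lim_frac0:
  fixes a b c :: real assumes a: "a > 0" and b: "b \<ge> 0"
  shows "(\<lambda>m. c / (a * real m + b)) \<longlonglongrightarrow> 0"
proof -
  have "(\<lambda>m. (c / real m) / (a + b / real m)) \<longlonglongrightarrow> 0 / (a + 0)"
    using a by (intro tendsto_intros lim_const_over_n) auto
  moreover have "eventually (\<lambda>m. (c / real m) / (a + b / real m) = c / (a * real m + b)) sequentially"
    using eventually_gt_at_top[of 0]
  proof eventually_elim
    case (elim m) thus ?case by (simp add: field_simps)
  qed
  ultimately show ?thesis by (auto intro: Lim_transform_eventually)
qed

lemma lim_frac1:
  fixes a b c :: real assumes a: "a > 0" and b: "b > 0"
  shows "(\<lambda>m. c * real m / (a * real m + b)) \<longlonglongrightarrow> c / a"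
proof -
  have "(\<lambda>m. c / a - (c * b / a) / (a * real m + b)) \<longlonglongrightarrow> c / a - 0"
    using b by (intro tendsto_intros lim_frac0 a) auto
  moreover have "c / a - (c * b / a) / (a * real m + b) = c * real m / (a * real m + b)" for m
  proof -
    define D where "D = a * real m + b"
    have D: "D > 0" using a b by (simp add: D_def add_nonneg_pos)
    have "c / a - (c * b / a) / D = c * (D - b) / (a * D)" using a D by (simp add: field_simps)
    also have "D - b = a * real m" by (simp add: D_def)
    also have "c * (a * real m) / (a * D) = c * real m / D" using a by simp
    finally show ?thesis by (simp add: D_def)
  qed
  ultimately show ?thesis by simp
qed

lemma Tm_lim:
  assumes p: "p \<ge> 2"
  shows "(\<lambda>m. Tm p m) \<longlonglongrightarrow> - (real p + 1) / 2"
proof -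
  let ?P = "real p"
  have P0: "?P > 0" using p by simp
  have e1: "?P * real m ^ 2 * Am p m - ?P * real m = - (\<Sum>r<p. (real r + 1) * real m / (?P * real m + (real r + 1)))" for m
  proof -
    have "?P * real m ^ 2 * Am p m - ?P * real m = (\<Sum>r<p. ?P * real m ^ 2 / (?P * real m + real r + 1) - real m)"
      by (simp add: Am_def sum_subtractf sum_distrib_left)
    also have "\<dots> = (\<Sum>r<p. - ((real r + 1) * real m / (?P * real m + (real r + 1))))"
    proof (rule sum.cong)
      fix r assume "r \<in> {..<p}"
      have "?P * real m + (real r + 1) > 0" by (simp add: add_nonneg_pos)
      thus "?P * real m ^ 2 / (?P * real m + real r + 1) - real m = - ((real r + 1) * real m / (?P * real m + (real r + 1)))"
        by (simp add: field_simps power2_eq_square)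
    qed simp
    finally show ?thesis by (simp add: sum_negf)
  qed
  have l1: "(\<lambda>m. \<Sum>r<p. (real r + 1) * real m / (?P * real m + (real r + 1))) \<longlonglongrightarrow> (\<Sum>r<p. (real r + 1) / ?P)"
    by (intro tendsto_sum lim_frac1 P0) simp
  have gauss: "(\<Sum>r<p. (real r + 1) / ?P) = (?P + 1) / 2"
  proof -
    have "(\<Sum>r<n. (real r + 1)) = real n * (real n + 1) / 2" for n
      by (induction n) (simp_all add: field_simps)
    thus ?thesis using P0 by (simp add: sum_divide_distrib[symmetric] field_simps)
  qed
  have l2: "(\<lambda>m. (?P - 1) / 2 / (?P * real m + 1)) \<longlonglongrightarrow> 0" by (rule lim_frac0) (use P0 in auto)
  have l3: "(\<lambda>m. 1 / (1 * real m + 1)) \<longlonglongrightarrow> 0" by (rule lim_frac0) auto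
  have "(\<lambda>m. - (\<Sum>r<p. (real r + 1) * real m / (?P * real m + (real r + 1))) - (?P - 1) / 2 / (?P * real m + 1) - 1 / (1 * real m + 1))
      \<longlonglongrightarrow> - ((?P + 1) / 2) - 0 - 0"
    using l1 l2 l3 unfolding gauss by (intro tendsto_intros)
  thus ?thesis unfolding Tm_def e1 by (simp add: minus_divide_left)
qed



lemma Gt_nonneg:
  assumes p: "p \<ge> 2" shows "Gt p k \<ge> 0"
proof -
  have "real p * real (k div p) \<le> real k"
    by (metis of_nat_le_iff of_nat_mult times_div_less_eq_dividend)
  hence n: "real k + 1 - (real p / 2) * real (k div p) \<ge> 0"
    using p by (simp add: field_simps)
  have d: "0 < (real k + 1) * (real k + real p + 1) * (real k + 2) * (real k + real p)"
    using p by (intro mult_pos_pos) auto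
  show ?thesis unfolding Gt_def using n d by (intro divide_nonneg_pos mult_nonneg_nonneg) auto
qed

theorem theorem1:
  fixes p :: nat
  assumes "p \<ge> 2"
  shows "(\<lambda>k::nat. (real p * (real p - 1) * (real p - 2) / pi) *
            (((real k + 1 - (real p / 2) * real (k div p)) * (real (k div p) + 1)) /
             ((real k + 1) * (real k + real p + 1) * (real k + 2) * (real k + real p))))
         sums c0 1 p"
proof -
  note p = assms
  define K where "K = real p * (real p - 1) * (real p - 2)"
  define f where "f k = K * Gt p k" for k
  have K0: "K \<ge> 0" using p unfolding K_def by simp
  have nn: "0 \<le> f k" for k unfolding f_def using K0 Gt_nonneg[OF p] by simp
  have ps: "(\<Sum>i<M*p. f i) = (\<Sum>m<M. Bm p m) + (Tm p 0 - Tm p M)" for M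
  proof -
    have "(\<Sum>i<M*p. f i) = (\<Sum>m<M. sum f {m * p ..< m * p + p})" by (simp add: sum.nat_group)
    also have "\<dots> = (\<Sum>m<M. Bm p m + Tm p m - Tm p (Suc m))"
    proof (rule sum.cong)
      fix m
      have "sum f {m * p ..< m * p + p} = sum f {0 + m * p ..< p + m * p}" by (simp add: add.commute)
      also have "\<dots> = (\<Sum>r<p. f (p * m + r))"
        unfolding sum.shift_bounds_nat_ivl by (simp add: atLeast0LessThan algebra_simps)
      also have "\<dots> = Bm p m + Tm p m - Tm p (Suc m)"
        unfolding f_def K_def by (rule block[OF p])
      finally show "sum f {m * p ..< m * p + p} = Bm p m + Tm p m - Tm p (Suc m)" .
    qed simp
    also have "\<dots> = (\<Sum>m<M. Bm p m) + (\<Sum>m<M. Tm p m - Tm p (Suc m))"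
      by (simp add: sum.distrib sum_subtractf)
    also have "(\<Sum>m<M. Tm p m - Tm p (Suc m)) = Tm p 0 - Tm p M"
      by (rule sum_lessThan_telescope')
    finally show ?thesis .
  qed
  have T0: "Tm p 0 = - (real p + 1) / 2" by (simp add: Tm_def field_simps)
  have lB: "(\<lambda>M. \<Sum>m<M. Bm p m) \<longlonglongrightarrow> pi * c0 1 p"
    using c0_series[OF p] by (simp add: sums_def)
  have "(\<lambda>M. (\<Sum>m<M. Bm p m) + (Tm p 0 - Tm p M)) \<longlonglongrightarrow> pi * c0 1 p + (Tm p 0 - (- (real p + 1) / 2))"
    by (intro tendsto_intros lB Tm_lim[OF p])
  hence lim: "(\<lambda>M. \<Sum>i<M*p. f i) \<longlonglongrightarrow> pi * c0 1 p" unfolding ps T0 by simp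
  have "f sums (pi * c0 1 p)" using nonneg_group_sums[OF nn _ lim] p by simp
  from sums_mult[OF this, of "1 / pi"]
  have "(\<lambda>k. 1 / pi * f k) sums c0 1 p" by simp
  moreover have "(\<lambda>k. 1 / pi * f k) = (\<lambda>k::nat. (real p * (real p - 1) * (real p - 2) / pi) *
            (((real k + 1 - (real p / 2) * real (k div p)) * (real (k div p) + 1)) /
             ((real k + 1) * (real k + real p + 1) * (real k + 2) * (real k + real p))))"
    by (rule ext) (simp add: f_def K_def Gt_def)
  ultimately show ?thesis by simp
qed


end
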